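(* Let $S=\{\rho_1=0<\rho_2<\cdots\}$ be an Arf numerical semigroup. Then for every positive integer $i$, $\beta(2\rho_i)=i$ and consequently $\#A[2\rho_i]=2i-1$.
   Context: A numerical semigroup is a submonoid $S$ of $(\mathbb{N}_0,+)$ with finite complement, with elements listed increasingly $\rho_1=0<\rho_2<\cdots$. $S$ is Arf if $\rho_i+\rho_j-\rho_k\in S$ for all positive integers $i\ge j\ge k$. For $\rho\in S$, $A[\rho]=\{p\in S:\ \rho-p\in S\}$ and $\beta(\rho)=\max\{j\ge1:\ \rho_1,\dots,\rho_j\in A[\rho]\ \text{and}\ 2\rho_j\le\rho\}$. *)

theory Defs
  imports Main "HOL-Library.Infinite_Set"
begin

definition numerical_semigroup :: "nat set \<Rightarrow> bool" where
  "numerical_semigroup S \<longleftrightarrow> 0 \<in> S \<and> (\<forall>a\<in>S. \<forall>b\<in>S. a + b \<in> S) \<and> finite (UNIV - S)"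

text \<open>rho S i is the i-th element of S in increasing order (i \<ge> 1), so rho S 1 = 0.\<close>
definition rho :: "nat set \<Rightarrow> nat \<Rightarrow> nat" where
  "rho S i = Infinite_Set.enumerate S (i - 1)"

definition arf :: "nat set \<Rightarrow> bool" where
  "arf S \<longleftrightarrow> (\<forall>i j k. 1 \<le> k \<and> k \<le> j \<and> j \<le> i \<longrightarrow> rho S i + rho S j - rho S k \<in> S)"

definition Aset :: "nat set \<Rightarrow> nat \<Rightarrow> nat set" where
  "Aset S r = {p \<in> S. p \<le> r \<and> r - p \<in> S}"

definition beta :: "nat set \<Rightarrow> nat \<Rightarrow> nat" where
  "beta S r = Max {j. 1 \<le> j \<and> (\<forall>l\<in>{1..j}. rho S l \<in> Aset S r) \<and> 2 * rho S j \<le> r}"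

end

theory Submission
  imports Defs
begin

lemma inf_S: "numerical_semigroup S \<Longrightarrow> infinite S"
  unfolding numerical_semigroup_def
  by (metis Diff_infinite_finite finite_Diff2 infinite_UNIV_nat)

lemma rho_in: "infinite S \<Longrightarrow> rho S l \<in> S"
  unfolding rho_def by (simp add: enumerate_in_set)

lemma rho_less: "infinite S \<Longrightarrow> 1 \<le> a \<Longrightarrow> a < b \<Longrightarrow> rho S a < rho S b"
  unfolding rho_def using strict_mono_enumerate
  by (metis diff_less_mono strict_mono_less)

lemma rho_le_iff: "infinite S \<Longrightarrow> 1 \<le> a \<Longrightarrow> 1 \<le> b \<Longrightarrow> rho S a \<le> rho S b \<longleftrightarrow> a \<le> b"
  using rho_less[of S a b] rho_less[of S b a] by (cases a b rule: linorder_cases) auto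

lemma rho_ex: "infinite S \<Longrightarrow> s \<in> S \<Longrightarrow> \<exists>n\<ge>1. rho S n = s"
  unfolding rho_def using enumerate_Ex
  by (metis add_diff_cancel_right' le_add2)

lemma rho_inj: "infinite S \<Longrightarrow> 1 \<le> a \<Longrightarrow> 1 \<le> b \<Longrightarrow> rho S a = rho S b \<Longrightarrow> a = b"
  using rho_less[of S a b] rho_less[of S b a] by (cases a b rule: linorder_cases) auto

theorem mainTheorem5:
  fixes S :: "nat set" and i :: nat
  assumes "numerical_semigroup S" and "arf S" and "1 \<le> i"
  shows "beta S (2 * rho S i) = i \<and> card (Aset S (2 * rho S i)) = 2 * i - 1"
proof -
  have inf: "infinite S" using assms(1) inf_S by blast
  define r where "r = 2 * rho S i"
  have ar: "r - rho S l \<in> S" if "1 \<le> l" "l \<le> i" for l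
  proof -
    have "rho S i + rho S i - rho S l \<in> S" using assms(2) that unfolding arf_def by blast
    thus ?thesis by (simp add: r_def mult_2)
  qed
  have le: "rho S l \<le> rho S i" if "1 \<le> l" "l \<le> i" for l
    using rho_le_iff[OF inf] that assms(3) by blast
  define A where "A = rho S ` {1..i}"
  define B where "B = (\<lambda>l. r - rho S l) ` {1..i}"
  have AinS: "A \<subseteq> Aset S r"
    unfolding A_def Aset_def using ar le rho_in[OF inf] by (force simp: r_def)
  have "B \<subseteq> Aset S r"
    unfolding B_def Aset_def using ar le rho_in[OF inf] by (force simp: r_def)
  moreover have "Aset S r \<subseteq> A \<union> B"
  proof
    fix p assume p: "p \<in> Aset S r"
    hence pS: "p \<in> S" "p \<le> r" "r - p \<in> S" unfolding Aset_def by auto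
    show "p \<in> A \<union> B"
    proof (cases "p \<le> rho S i")
      case True
      obtain n where n: "n \<ge> 1" "rho S n = p" using rho_ex[OF inf pS(1)] by blast
      hence "n \<le> i" using True rho_le_iff[OF inf] assms(3) by metis
      thus ?thesis using n unfolding A_def by auto
    next
      case False
      obtain n where n: "n \<ge> 1" "rho S n = r - p" using rho_ex[OF inf pS(3)] by blast
      hence "rho S n \<le> rho S i" using False by (simp add: r_def)
      hence "n \<le> i" using n rho_le_iff[OF inf] assms(3) by metis
      have eq: "p = r - rho S n" using n pS by simp
      have ni: "n \<in> {1..i}" using n(1) \<open>n \<le> i\<close> by simp
      have "p \<in> B" unfolding B_def eq using ni by (rule imageI)
      thus ?thesis by blast
    qed
  qed
  ultimately have AB: "Aset S r = A \<union> B" using AinS by blast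
  have cA: "card A = i" unfolding A_def
    by (rule trans[OF card_image]) (auto intro!: inj_onI intro: rho_inj[OF inf])
  have cB: "card B = i" unfolding B_def
  proof (rule trans[OF card_image])
    show "inj_on (\<lambda>l. r - rho S l) {1..i}"
    proof (rule inj_onI)
      fix a b assume "a \<in> {1..i}" "b \<in> {1..i}" "r - rho S a = r - rho S b"
      hence "rho S a = rho S b" using le[of a] le[of b] by (simp add: r_def)
      thus "a = b" using \<open>a \<in> {1..i}\<close> \<open>b \<in> {1..i}\<close> using rho_inj[OF inf] by auto
    qed
  qed simp
  have AiB: "A \<inter> B = {rho S i}"
  proof
    show "{rho S i} \<subseteq> A \<inter> B" unfolding A_def B_def r_def using assms(3) by force
    show "A \<inter> B \<subseteq> {rho S i}"
    proof
      fix x assume "x \<in> A \<inter> B"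
      then obtain a b where ab: "a \<in> {1..i}" "b \<in> {1..i}" "x = rho S a" "x = r - rho S b"
        unfolding A_def B_def by auto
      have "rho S a \<le> rho S i" "rho S b \<le> rho S i" using ab le by auto
      thus "x \<in> {rho S i}" using ab by (simp add: r_def)
    qed
  qed
  have fin: "finite A" "finite B" unfolding A_def B_def by auto
  have "card (Aset S r) = 2 * i - 1"
    using card_Un_Int[OF fin] AB AiB cA cB by simp
  moreover have "beta S r = i"
    unfolding beta_def
  proof (rule Max_eqI)
    let ?J = "{j. 1 \<le> j \<and> (\<forall>l\<in>{1..j}. rho S l \<in> Aset S r) \<and> 2 * rho S j \<le> r}"
    have sub: "?J \<subseteq> {..i}"
    proof
      fix j assume j: "j \<in> ?J"
      hence "rho S j \<le> rho S i" by (simp add: r_def)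
      thus "j \<in> {..i}" using j rho_le_iff[OF inf] assms(3) by auto
    qed
    show "finite ?J" using finite_subset[OF sub] by blast
    show "\<And>y. y \<in> ?J \<Longrightarrow> y \<le> i" using sub by blast
    show "i \<in> ?J" using assms(3) AinS unfolding A_def by (auto simp: r_def)
  qed
  ultimately show ?thesis by (simp add: r_def)
qed

end
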